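(* For every integer $m\ge1$ and all integers $a,b\ge 1$, $$M\big(\mathcal G(m,a)\,\mathcal G(m,-b)\big)=M\big(\mathcal G(m,a-1)\,\mathcal G(m,-(b-1))\big),$$ and $M\big(\mathcal G(m,-a)\,\mathcal G(m,-b)\big)=M\big(\mathcal G(m,-(a+b))\big)$ for all integers $a,b\ge 0$. (Here $\mathcal G(m,0)$ for the factor with $a-1=0$ is interpreted via the same definition as for $n\le 0$.)
   Context: Grid conventions: an $m$-by-$N$ grid has vertices $(i,j)$, $1\le i\le m$ (rows), $1\le j\le N$ (columns); horizontal edges join $(i,j),(i,j+1)$, vertical edges join $(i,j),(i+1,j)$. A signed graph is a graph each of whose edges carries a sign $+1$ or $-1$ (parallel edges allowed). For a signed graph $\mathcal G$, $M(\mathcal G)$ denotes the sum over all perfect matchings of $\mathcal G$ of the product of the signs of the edges in the matching. For $m\ge1$ and $n\ge 1$, $\mathcal G(m,n)$ is the $m$-by-$n$ grid graph with all edges of sign $+1$. For $n\le 0$, $\mathcal G(m,n)$ has the vertex set of the $m$-by-$(2-n)$ grid, all horizontal edges of that grid with sign $+1$, the vertical edges lying in columns $2,3,\dots,1-n$ with sign $-1$, and no vertical edges in columns $1$ and $2-n$. For signed graphs $\mathcal G_1,\mathcal G_2$ whose vertex sets are those of $m$-row grids, the adjoined graph $\mathcal G_1\mathcal G_2$ is obtained by placing $\mathcal G_1$ to the left of $\mathcal G_2$ and joining, for each row $i$, the rightmost vertex of row $i$ of $\mathcal G_1$ to the leftmost vertex of row $i$ of $\mathcal G_2$ by an edge of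 sign $+1$. *)

theory Defs
  imports Main
begin

text \<open>Vertices are pairs (row, column).  A signed graph is a vertex set together with a
list of signed edges (u, v, s); listing edges allows parallel edges.\<close>

type_synonym vertex = "nat \<times> nat"
type_synonym sedge = "vertex \<times> vertex \<times> int"
type_synonym sgraph = "vertex set \<times> sedge list"

definition grid_vertices :: "nat \<Rightarrow> nat \<Rightarrow> vertex set" where
  "grid_vertices m w = {1..m} \<times> {1..w}"

definition horiz_edges :: "nat \<Rightarrow> nat \<Rightarrow> sedge list" where
  "horiz_edges m w = [((i,j),(i,j+1),1). i \<leftarrow> [1..<m+1], j \<leftarrow> [1..<w]]"

definition vert_edges :: "nat \<Rightarrow> nat list \<Rightarrow> int \<Rightarrow> sedge list" where
  "vert_edges m cols s = [((i,j),(i+1,j),s). i \<leftarrow> [1..<m], j \<leftarrow> cols]"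

definition Gmn :: "nat \<Rightarrow> int \<Rightarrow> sgraph" where
  "Gmn m n =
    (if n \<ge> 1 then
       (grid_vertices m (nat n), horiz_edges m (nat n) @ vert_edges m [1..<nat n + 1] 1)
     else
       (grid_vertices m (nat (2 - n)),
        horiz_edges m (nat (2 - n)) @ vert_edges m [2..<nat (1 - n) + 1] (-1)))"

definition shift_v :: "nat \<Rightarrow> vertex \<Rightarrow> vertex" where
  "shift_v w v = (fst v, snd v + w)"

definition width :: "sgraph \<Rightarrow> nat" where
  "width G = Max (snd ` fst G)"

definition adjoin :: "nat \<Rightarrow> sgraph \<Rightarrow> sgraph \<Rightarrow> sgraph" where
  "adjoin m G1 G2 =
    (let w = width G1 in
     (fst G1 \<union> shift_v w ` fst G2,
      snd G1 @ map (\<lambda>(u,v,s). (shift_v w u, shift_v w v, s)) (snd G2)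
        @ [((i,w),(i,w+1),1). i \<leftarrow> [1..<m+1]]))"

definition is_perfect_matching :: "sgraph \<Rightarrow> nat set \<Rightarrow> bool" where
  "is_perfect_matching G S \<longleftrightarrow>
     S \<subseteq> {..<length (snd G)} \<and>
     (\<forall>k\<in>S. fst (snd G ! k) \<in> fst G \<and> fst (snd (snd G ! k)) \<in> fst G) \<and>
     (\<forall>v\<in>fst G. card {k\<in>S. fst (snd G ! k) = v \<or> fst (snd (snd G ! k)) = v} = 1)"

definition Msum :: "sgraph \<Rightarrow> int" where
  "Msum G = (\<Sum>S\<in>{S. is_perfect_matching G S}. \<Prod>k\<in>S. snd (snd (snd G ! k)))"

end

theory Submission
  imports Defs
begin

lemma D_term:
  assumes "finite X" "X \<noteq> {}"
  shows "card (X - {Min X, Suc (Min X)}) < card X"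
proof -
  have m: "Min X \<in> X" using assms by simp
  have "card (X - {Min X, Suc (Min X)}) \<le> card (X - {Min X})"
    using assms by (intro card_mono) auto
  also have "\<dots> < card X" using assms(1) m by (rule card_Diff1_less)
  finally show ?thesis .
qed

function D :: "int \<Rightarrow> nat set \<Rightarrow> int" where
  "D s X = (if X = {} \<or> infinite X then 1 else
     (if Min X + 1 \<in> X then s * D s (X - {Min X, Min X + 1}) else 0))"
  by auto
termination
  by (relation "measure (\<lambda>(s,X). card X)") (simp_all add: card_gt_0_iff)

declare D.simps[simp del]

lemma D_empty[simp]: "D s {} = 1"
  by (simp add: D.simps)

lemma D_min:
  assumes "finite X" "i \<in> X" "\<forall>x\<in>X. i \<le> x"
  shows "D s X = (if i + 1 \<in> X then s * D s (X - {i, i+1}) else 0)"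
proof -
  have "Min X = i" using assms by (simp add: Min_eqI)
  then show ?thesis using assms by (subst D.simps) auto
qed

lemma D_zero: "finite X \<Longrightarrow> D 0 X = (if X = {} then 1 else 0)"
  by (subst D.simps) auto

lemma sum_Pow_insert:
  assumes "finite A" "a \<notin> A"
  shows "(\<Sum>Y\<in>Pow (insert a A). f Y) = (\<Sum>Y\<in>Pow A. f Y) + (\<Sum>Y\<in>Pow A. f (insert a Y))"
proof -
  have "Pow (insert a A) = Pow A \<union> insert a ` Pow A" by (rule Pow_insert)
  moreover have "Pow A \<inter> insert a ` Pow A = {}" using assms by auto
  moreover have "inj_on (insert a) (Pow A)"
  proof (rule inj_onI)
    fix x y assume xy: "x \<in> Pow A" "y \<in> Pow A" "insert a x = insert a y"
    then have "x = insert a x - {a}" "y = insert a y - {a}" using assms by auto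
    then show "x = y" using xy by simp
  qed
  ultimately show ?thesis using assms
    by (simp add: sum.union_disjoint sum.reindex)
qed

lemma K_lemma:
  assumes "finite X"
  shows "(\<Sum>Y\<in>Pow X. D 1 (X - Y) * D (-1) Y) = (if X = {} then 1 else 0)"
proof (cases "X = {}")
  case True then show ?thesis by simp
next
  case False
  define i where "i = Min X"
  have iX: "i \<in> X" and imin: "\<forall>x\<in>X. i \<le> x" using False assms by (auto simp: i_def)
  show ?thesis
  proof (cases "i + 1 \<in> X")
    case False2: False
    have "D 1 (X - Y) * D (-1) Y = 0" if "Y \<in> Pow X" for Y
    proof (cases "i \<in> Y")
      case True
      have "D (-1) Y = 0" using that True imin False2 assms
        by (subst D_min[where i=i]) (auto intro: finite_subset)
      then show ?thesis by simp
    next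
      case False
      have "D 1 (X - Y) = 0" using that False imin False2 assms iX
        by (subst D_min[where i=i]) auto
      then show ?thesis by simp
    qed
    then have "(\<Sum>Y\<in>Pow X. D 1 (X - Y) * D (-1) Y) = (\<Sum>Y\<in>Pow X. 0)"
      by (intro sum.cong) auto
    then show ?thesis using \<open>X \<noteq> {}\<close> by simp
  next
    case True
    define X' where "X' = X - {i, i+1}"
    have fX': "finite X'" using assms by (simp add: X'_def)
    have X: "X = insert i (insert (i+1) X')" using iX True by (auto simp: X'_def)
    have big: "\<forall>x\<in>X'. i + 1 < x" using imin by (auto simp: X'_def)
    define f where "f Y = D 1 (X - Y) * D (-1) Y" for Y
    have n1: "i \<notin> insert (i+1) X'" and n2: "i+1 \<notin> X'" using big by auto
    have fX'': "finite (insert (i+1) X')" using fX' by simp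
    have "sum f (Pow X) = sum f (Pow (insert (i+1) X')) + sum (\<lambda>Y. f (insert i Y)) (Pow (insert (i+1) X'))"
      unfolding X by (rule sum_Pow_insert[OF fX'' n1])
    also have "\<dots> = sum f (Pow X') + sum (\<lambda>Y. f (insert (i+1) Y)) (Pow X') +
       (sum (\<lambda>Y. f (insert i Y)) (Pow X') + sum (\<lambda>Y. f (insert i (insert (i+1) Y))) (Pow X'))"
      using sum_Pow_insert[OF fX' n2, of f] sum_Pow_insert[OF fX' n2, of "\<lambda>Y. f (insert i Y)"] by simp
    finally have "(\<Sum>Y\<in>Pow X. D 1 (X - Y) * D (-1) Y) =
      (\<Sum>Y\<in>Pow X'. D 1 (X - Y) * D (-1) Y) +
      (\<Sum>Y\<in>Pow X'. D 1 (X - insert (i+1) Y) * D (-1) (insert (i+1) Y)) +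
      ((\<Sum>Y\<in>Pow X'. D 1 (X - insert i Y) * D (-1) (insert i Y)) +
      (\<Sum>Y\<in>Pow X'. D 1 (X - insert i (insert (i+1) Y)) * D (-1) (insert i (insert (i+1) Y))))"
      by (simp add: f_def)
    also have "\<dots> = (\<Sum>Y\<in>Pow X'. D 1 (X' - Y) * D (-1) Y) + 0 +
       (0 + (\<Sum>Y\<in>Pow X'. - (D 1 (X' - Y) * D (-1) Y)))"
    proof -
      have e1: "D 1 (X - Y) = D 1 (X' - Y)" if "Y \<in> Pow X'" for Y
      proof -
        have "D 1 (X - Y) = D 1 (X - Y - {i, i+1})"
          using that big assms iX True imin by (subst D_min[where i=i]) (auto simp: X'_def)
        moreover have "X - Y - {i,i+1} = X' - Y" by (auto simp: X'_def)
        ultimately show ?thesis by simp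
      qed
      have e2: "D 1 (X - insert (i+1) Y) = 0" if "Y \<in> Pow X'" for Y
        using that big assms iX True imin by (subst D_min[where i=i]) (auto simp: X'_def)
      have e3: "D (-1) (insert i Y) = 0" if "Y \<in> Pow X'" for Y
      proof -
        have yb: "\<forall>x\<in>Y. i + 1 < x" using that big by auto
        show ?thesis using that yb fX' by (subst D_min[where i=i]) (auto intro: finite_subset)
      qed
      have e4: "D (-1) (insert i (insert (i+1) Y)) = - D (-1) Y" if "Y \<in> Pow X'" for Y
      proof -
        have yb: "\<forall>x\<in>Y. i + 1 < x" using that big by auto
        have "D (-1) (insert i (insert (i+1) Y)) = - D (-1) (insert i (insert (i+1) Y) - {i,i+1})"
          using that yb fX'  by (subst D_min[where i=i]) (auto intro: finite_subset)
        moreover have "insert i (insert (i+1) Y) - {i,i+1} = Y" using yb by auto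
        ultimately show ?thesis by simp
      qed
      have e5: "X - insert i (insert (i+1) Y) = X' - Y" if "Y \<in> Pow X'" for Y
        using that by (auto simp: X'_def)
      have s1: "(\<Sum>Y\<in>Pow X'. D 1 (X - Y) * D (-1) Y) = (\<Sum>Y\<in>Pow X'. D 1 (X' - Y) * D (-1) Y)"
        by (rule sum.cong) (simp_all only: e1)
      have s2: "(\<Sum>Y\<in>Pow X'. D 1 (X - insert (i+1) Y) * D (-1) (insert (i+1) Y)) = 0"
        by (intro sum.neutral ballI) (metis e2 mult_zero_left)
      have s3: "(\<Sum>Y\<in>Pow X'. D 1 (X - insert i Y) * D (-1) (insert i Y)) = 0"
        by (intro sum.neutral ballI) (metis e3 mult_zero_right)
      have s4: "(\<Sum>Y\<in>Pow X'. D 1 (X - insert i (insert (i+1) Y)) * D (-1) (insert i (insert (i+1) Y)))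
          = (\<Sum>Y\<in>Pow X'. - (D 1 (X' - Y) * D (-1) Y))"
        by (rule sum.cong) (simp_all only: e4 e5 mult_minus_right)
      show ?thesis by (simp only: s1 s2 s3 s4)
    qed
    also have "\<dots> = 0" by (simp add: sum_negf)
    finally show ?thesis using \<open>X \<noteq> {}\<close> by simp
  qed
qed

definition step :: "nat \<Rightarrow> int \<Rightarrow> (nat set \<Rightarrow> int) \<Rightarrow> nat set \<Rightarrow> int" where
  "step m s f R = (\<Sum>B\<in>Pow R. D s (R - B) * f ({1..m} - B))"

fun prog :: "nat \<Rightarrow> int list \<Rightarrow> (nat set \<Rightarrow> int) \<Rightarrow> nat set \<Rightarrow> int" where
  "prog m [] f = f"
| "prog m (s # ss) f = step m s (prog m ss f)"

lemma prog_append: "prog m (xs @ ys) f = prog m xs (prog m ys f)"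
  by (induction xs) auto

definition eqon :: "nat \<Rightarrow> (nat set \<Rightarrow> int) \<Rightarrow> (nat set \<Rightarrow> int) \<Rightarrow> bool" where
  "eqon m f g \<longleftrightarrow> (\<forall>R. R \<subseteq> {1..m} \<longrightarrow> f R = g R)"

lemma step_cong: "eqon m f g \<Longrightarrow> eqon m (step m s f) (step m s g)"
  unfolding eqon_def step_def by (auto intro!: sum.cong)

lemma prog_cong: "eqon m f g \<Longrightarrow> eqon m (prog m xs f) (prog m xs g)"
  by (induction xs) (auto intro: step_cong)

lemma eqon_trans: "eqon m f g \<Longrightarrow> eqon m g h \<Longrightarrow> eqon m f h"
  unfolding eqon_def by auto

lemma step0:
  assumes "R \<subseteq> {1..m}"
  shows "step m 0 f R = f ({1..m} - R)"
proof -
  have fR: "finite R" using assms finite_subset by blast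
  have "step m 0 f R = (\<Sum>B\<in>Pow R. if B = R then f ({1..m} - B) else 0)"
    unfolding step_def
  proof (rule sum.cong)
    fix B assume "B \<in> Pow R"
    then have "finite (R - B)" "(R - B = {}) = (B = R)" using fR by auto
    then show "D 0 (R - B) * f ({1..m} - B) = (if B = R then f ({1..m} - B) else 0)"
      by (simp add: D_zero)
  qed simp
  also have "\<dots> = f ({1..m} - R)" using fR by simp
  finally show ?thesis .
qed

lemma step00: "eqon m (step m 0 (step m 0 f)) f"
  unfolding eqon_def
proof (intro allI impI)
  fix R :: "nat set" assume R: "R \<subseteq> {1..m}"
  have "step m 0 (step m 0 f) R = step m 0 f ({1..m} - R)" using R by (rule step0)
  also have "\<dots> = f ({1..m} - ({1..m} - R))" by (rule step0) auto
  also have "{1..m} - ({1..m} - R) = R" using R by auto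
  finally show "step m 0 (step m 0 f) R = f R" .
qed

lemma inner_sum:
  assumes fR: "finite R" and C: "C \<subseteq> R"
  shows "(\<Sum>B\<in>{B. B \<in> Pow R \<and> C \<subseteq> B}. D 1 (R - B) * D (-1) (B - C)) = (if C = R then 1 else 0)"
proof -
  have img: "{B. B \<in> Pow R \<and> C \<subseteq> B} = (\<lambda>Y. C \<union> Y) ` Pow (R - C)"
  proof
    show "{B. B \<in> Pow R \<and> C \<subseteq> B} \<subseteq> (\<lambda>Y. C \<union> Y) ` Pow (R - C)"
    proof
      fix B assume "B \<in> {B. B \<in> Pow R \<and> C \<subseteq> B}"
      then have "B = C \<union> (B - C)" "B - C \<in> Pow (R - C)" by auto
      then show "B \<in> (\<lambda>Y. C \<union> Y) ` Pow (R - C)" by blast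
    qed
  qed (use C in auto)
  have inj: "inj_on (\<lambda>Y. C \<union> Y) (Pow (R - C))"
  proof (rule inj_onI)
    fix x y assume xy: "x \<in> Pow (R - C)" "y \<in> Pow (R - C)" "C \<union> x = C \<union> y"
    then have "x = (C \<union> x) - C" "y = (C \<union> y) - C" by auto
    then show "x = y" using xy by simp
  qed
  have "(\<Sum>B\<in>{B. B \<in> Pow R \<and> C \<subseteq> B}. D 1 (R - B) * D (-1) (B - C)) =
        (\<Sum>Y\<in>Pow (R - C). D 1 (R - (C \<union> Y)) * D (-1) ((C \<union> Y) - C))"
    unfolding img by (simp add: sum.reindex[OF inj])
  also have "\<dots> = (\<Sum>Y\<in>Pow (R - C). D 1 ((R - C) - Y) * D (-1) Y)"
  proof (rule sum.cong)
    fix Y assume "Y \<in> Pow (R - C)"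
    then have "R - (C \<union> Y) = (R - C) - Y" "(C \<union> Y) - C = Y" by auto
    then show "D 1 (R - (C \<union> Y)) * D (-1) ((C \<union> Y) - C) = D 1 ((R - C) - Y) * D (-1) Y" by simp
  qed simp
  also have "\<dots> = (if R - C = {} then 1 else 0)" using fR by (intro K_lemma) simp
  also have "(R - C = {}) = (C = R)" using C by auto
  finally show ?thesis by simp
qed

lemma step_1_0_m1: "eqon m (step m 1 (step m 0 (step m (-1) f))) (step m 0 f)"
  unfolding eqon_def
proof (intro allI impI)
  fix R :: "nat set" assume R: "R \<subseteq> {1..m}"
  have fR: "finite R" using R finite_subset by blast
  define g where "g B C = D 1 (R - B) * D (-1) (B - C) * f ({1..m} - C)" for B C
  have "step m 1 (step m 0 (step m (-1) f)) R = (\<Sum>B\<in>Pow R. D 1 (R - B) * step m (-1) f B)"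
    unfolding step_def[of m 1]
  proof (rule sum.cong)
    fix B assume B: "B \<in> Pow R"
    have "step m 0 (step m (-1) f) ({1..m} - B) = step m (-1) f ({1..m} - ({1..m} - B))"
      by (rule step0) auto
    also have "{1..m} - ({1..m} - B) = B" using B R by auto
    finally show "D 1 (R - B) * step m 0 (step m (-1) f) ({1..m} - B) = D 1 (R - B) * step m (-1) f B"
      by simp
  qed simp
  also have "\<dots> = (\<Sum>B\<in>Pow R. \<Sum>C\<in>{C. C \<in> Pow R \<and> C \<subseteq> B}. g B C)"
  proof (rule sum.cong)
    fix B assume B: "B \<in> Pow R"
    have "{C. C \<in> Pow R \<and> C \<subseteq> B} = Pow B" using B by auto
    then show "D 1 (R - B) * step m (-1) f B = (\<Sum>C\<in>{C. C \<in> Pow R \<and> C \<subseteq> B}. g B C)"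
      by (simp add: step_def g_def sum_distrib_left mult.assoc)
  qed simp
  also have "\<dots> = (\<Sum>C\<in>Pow R. \<Sum>B\<in>{B. B \<in> Pow R \<and> C \<subseteq> B}. g B C)"
    using fR by (intro sum.swap_restrict) auto
  also have "\<dots> = (\<Sum>C\<in>Pow R. (if C = R then f ({1..m} - C) else 0))"
  proof (rule sum.cong)
    fix C assume C: "C \<in> Pow R"
    have "(\<Sum>B\<in>{B. B \<in> Pow R \<and> C \<subseteq> B}. g B C) =
       (\<Sum>B\<in>{B. B \<in> Pow R \<and> C \<subseteq> B}. D 1 (R - B) * D (-1) (B - C)) * f ({1..m} - C)"
      by (simp add: g_def sum_distrib_right)
    also have "\<dots> = (if C = R then f ({1..m} - C) else 0)"
      using inner_sum[OF fR] C by simp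
    finally show "(\<Sum>B\<in>{B. B \<in> Pow R \<and> C \<subseteq> B}. g B C) = (if C = R then f ({1..m} - C) else 0)" .
  qed simp
  also have "\<dots> = f ({1..m} - R)" using fR by simp
  also have "\<dots> = step m 0 f R" using R by (simp add: step0)
  finally show "step m 1 (step m 0 (step m (-1) f)) R = step m 0 f R" .
qed

definition ea :: "sedge list \<Rightarrow> nat \<Rightarrow> vertex" where "ea E k = fst (E ! k)"
definition eb :: "sedge list \<Rightarrow> nat \<Rightarrow> vertex" where "eb E k = fst (snd (E ! k))"
definition sg :: "sedge list \<Rightarrow> nat \<Rightarrow> int" where "sg E k = snd (snd (E ! k))"

definition Wt :: "sedge list \<Rightarrow> vertex \<Rightarrow> vertex \<Rightarrow> int" where
  "Wt E v u = (\<Sum>k<length E. if (ea E k = v \<and> eb E k = u) \<or> (ea E k = u \<and> eb E k = v) then sg E k else 0)"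

definition noloop :: "sedge list \<Rightarrow> bool" where
  "noloop E \<longleftrightarrow> (\<forall>k<length E. ea E k \<noteq> eb E k)"

definition PMs :: "vertex set \<Rightarrow> sedge list \<Rightarrow> nat set set" where
  "PMs V E = {S. is_perfect_matching (V, E) S}"

lemma PMs_iff: "S \<in> PMs V E \<longleftrightarrow> S \<subseteq> {..<length E} \<and> (\<forall>k\<in>S. ea E k \<in> V \<and> eb E k \<in> V) \<and>
   (\<forall>x\<in>V. card {k\<in>S. ea E k = x \<or> eb E k = x} = 1)"
  by (simp add: PMs_def is_perfect_matching_def ea_def eb_def)

lemma Msum_PMs: "Msum (V, E) = (\<Sum>S\<in>PMs V E. \<Prod>k\<in>S. sg E k)"
  by (simp add: Msum_def PMs_def sg_def)

lemma PMs_finite: "finite (PMs V E)"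
proof -
  have "PMs V E \<subseteq> Pow {..<length E}" by (auto simp: PMs_iff)
  then show ?thesis by (rule finite_subset) simp
qed

lemma Msum_empty: "Msum ({}, E) = 1"
proof -
  have "PMs {} E = {{}}" by (auto simp: PMs_iff)
  then show ?thesis by (simp add: Msum_PMs)
qed

lemma card1_eq: "card A = 1 \<Longrightarrow> x \<in> A \<Longrightarrow> y \<in> A \<Longrightarrow> x = y"
  by (metis card_1_singletonE singletonD)

lemma insert_pm:
  assumes k: "k < length E" "ea E k \<in> V" "eb E k \<in> V"
    and S': "S' \<in> PMs (V - {ea E k, eb E k}) E"
  shows "insert k S' \<in> PMs V E" "k \<notin> S'"
proof -
  from S' have s1: "S' \<subseteq> {..<length E}"
    and s2: "\<forall>k'\<in>S'. ea E k' \<in> V - {ea E k, eb E k} \<and> eb E k' \<in> V - {ea E k, eb E k}"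
    and s3: "\<forall>x\<in>V - {ea E k, eb E k}. card {k'\<in>S'. ea E k' = x \<or> eb E k' = x} = 1"
    by (auto simp: PMs_iff)
  show kn: "k \<notin> S'" using s2 by auto
  have "card {k'\<in>insert k S'. ea E k' = x \<or> eb E k' = x} = 1" if x: "x \<in> V" for x
  proof (cases "x = ea E k \<or> x = eb E k")
    case True
    then have "{k'\<in>insert k S'. ea E k' = x \<or> eb E k' = x} = {k}" using s2 by auto
    then show ?thesis by simp
  next
    case False
    then have "{k'\<in>insert k S'. ea E k' = x \<or> eb E k' = x} = {k'\<in>S'. ea E k' = x \<or> eb E k' = x}"
      by auto
    then show ?thesis using s3 x False by auto
  qed
  then show "insert k S' \<in> PMs V E" using s1 s2 k by (auto simp: PMs_iff)
qed

lemma split_pm: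
  assumes S: "S \<in> PMs V E" and v: "v \<in> V"
  obtains k where "k \<in> S" "ea E k = v \<or> eb E k = v"
    "\<forall>k'\<in>S. (ea E k' = v \<or> eb E k' = v) \<longrightarrow> k' = k"
    "S - {k} \<in> PMs (V - {ea E k, eb E k}) E"
proof -
  from S have s1: "S \<subseteq> {..<length E}"
    and s2: "\<forall>k'\<in>S. ea E k' \<in> V \<and> eb E k' \<in> V"
    and s3: "\<forall>x\<in>V. card {k'\<in>S. ea E k' = x \<or> eb E k' = x} = 1"
    by (auto simp: PMs_iff)
  from s3 v obtain k where kk: "{k'\<in>S. ea E k' = v \<or> eb E k' = v} = {k}"
    by (metis card_1_singletonE)
  then have kS: "k \<in> S" and kv: "ea E k = v \<or> eb E k = v" by auto
  have uniq: "\<forall>k'\<in>S. (ea E k' = v \<or> eb E k' = v) \<longrightarrow> k' = k" using kk by auto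
  have "S - {k} \<in> PMs (V - {ea E k, eb E k}) E"
  proof -
    have t2: "ea E k' \<in> V - {ea E k, eb E k} \<and> eb E k' \<in> V - {ea E k, eb E k}" if k': "k' \<in> S - {k}" for k'
    proof -
      have a: "ea E k \<in> V" "eb E k \<in> V" using s2 kS by auto
      have "k' \<noteq> k" using k' by simp
      moreover
      have "k' = k" if "ea E k' = ea E k \<or> eb E k' = ea E k"
        using card1_eq[OF s3[rule_format, OF a(1)], of k' k] that k' kS by auto
      moreover
      have "k' = k" if "ea E k' = eb E k \<or> eb E k' = eb E k"
        using card1_eq[OF s3[rule_format, OF a(2)], of k' k] that k' kS by auto
      ultimately show ?thesis using s2 k' by auto
    qed
    have t3: "card {k'\<in>S - {k}. ea E k' = x \<or> eb E k' = x} = 1" if x: "x \<in> V - {ea E k, eb E k}" for x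
    proof -
      have "{k'\<in>S - {k}. ea E k' = x \<or> eb E k' = x} = {k'\<in>S. ea E k' = x \<or> eb E k' = x}"
        using x by auto
      then show ?thesis using s3 x by auto
    qed
    show ?thesis using s1 t2 t3 by (auto simp: PMs_iff)
  qed
  then show ?thesis using that kS kv uniq by blast
qed

lemma expand:
  assumes fV: "finite V" and v: "v \<in> V" and nl: "noloop E"
  shows "Msum (V, E) = (\<Sum>u\<in>V - {v}. Wt E v u * Msum (V - {v, u}, E))"
proof -
  define Kv where "Kv = {k. k < length E \<and> ((ea E k = v \<and> eb E k \<in> V) \<or> (eb E k = v \<and> ea E k \<in> V))}"
  define oth where "oth k = (if ea E k = v then eb E k else ea E k)" for k
  define M where "M U = Msum (U, E)" for U
  have fK: "finite Kv" unfolding Kv_def by simp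
  have per_u: "Wt E v u * M (V - {v, u}) = (\<Sum>k\<in>{k\<in>Kv. oth k = u}. sg E k * M (V - {ea E k, eb E k}))"
    if u: "u \<in> V - {v}" for u
  proof -
    have set_eq: "{k\<in>Kv. oth k = u} = {k\<in>{..<length E}. (ea E k = v \<and> eb E k = u) \<or> (ea E k = u \<and> eb E k = v)}"
      using u by (auto simp: Kv_def oth_def)
    have "Wt E v u * M (V - {v, u}) =
      (\<Sum>k<length E. if (ea E k = v \<and> eb E k = u) \<or> (ea E k = u \<and> eb E k = v) then sg E k * M (V - {v, u}) else 0)"
      unfolding Wt_def sum_distrib_right by (rule sum.cong) auto
    also have "\<dots> = (\<Sum>k\<in>{k\<in>{..<length E}. (ea E k = v \<and> eb E k = u) \<or> (ea E k = u \<and> eb E k = v)}. sg E k * M (V - {v, u}))"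
      by (rule sum.inter_filter[symmetric]) simp
    also have "\<dots> = (\<Sum>k\<in>{k\<in>Kv. oth k = u}. sg E k * M (V - {ea E k, eb E k}))"
      unfolding set_eq
    proof (rule sum.cong)
      fix k assume "k \<in> {k\<in>{..<length E}. (ea E k = v \<and> eb E k = u) \<or> (ea E k = u \<and> eb E k = v)}"
      then have "{v, u} = {ea E k, eb E k}" by auto
      then show "sg E k * M (V - {v, u}) = sg E k * M (V - {ea E k, eb E k})" by simp
    qed simp
    finally show ?thesis .
  qed
  have "(\<Sum>u\<in>V - {v}. Wt E v u * M (V - {v, u})) =
      (\<Sum>u\<in>V - {v}. \<Sum>k\<in>{k\<in>Kv. oth k = u}. sg E k * M (V - {ea E k, eb E k}))"
    using per_u by (rule sum.cong[OF refl])
  also have "\<dots> = (\<Sum>k\<in>Kv. sg E k * M (V - {ea E k, eb E k}))"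
  proof (rule sum.group)
    show "oth ` Kv \<subseteq> V - {v}"
      using nl by (auto simp: Kv_def oth_def noloop_def)
  qed (use fK fV in auto)
  also have "\<dots> = (\<Sum>k\<in>Kv. \<Sum>S'\<in>PMs (V - {ea E k, eb E k}) E. \<Prod>j\<in>insert k S'. sg E j)"
  proof (rule sum.cong[OF refl])
    fix k assume k: "k \<in> Kv"
    have "sg E k * M (V - {ea E k, eb E k}) = (\<Sum>S'\<in>PMs (V - {ea E k, eb E k}) E. sg E k * (\<Prod>j\<in>S'. sg E j))"
      by (simp add: M_def Msum_PMs sum_distrib_left)
    also have "\<dots> = (\<Sum>S'\<in>PMs (V - {ea E k, eb E k}) E. \<Prod>j\<in>insert k S'. sg E j)"
    proof (rule sum.cong[OF refl])
      fix S' assume S': "S' \<in> PMs (V - {ea E k, eb E k}) E"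
      have "k \<notin> S'" using insert_pm(2)[OF _ _ _ S'] k v by (auto simp: Kv_def)
      moreover have "finite S'" using S' by (auto simp: PMs_iff intro: finite_subset)
      ultimately show "sg E k * (\<Prod>j\<in>S'. sg E j) = (\<Prod>j\<in>insert k S'. sg E j)" by simp
    qed
    finally show "sg E k * M (V - {ea E k, eb E k}) = (\<Sum>S'\<in>PMs (V - {ea E k, eb E k}) E. \<Prod>j\<in>insert k S'. sg E j)" .
  qed
  also have "\<dots> = (\<Sum>p\<in>Sigma Kv (\<lambda>k. PMs (V - {ea E k, eb E k}) E). \<Prod>j\<in>insert (fst p) (snd p). sg E j)"
    by (subst sum.Sigma) (auto simp: fK PMs_finite split_def)
  also have "\<dots> = (\<Sum>S\<in>PMs V E. \<Prod>j\<in>S. sg E j)"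
  proof (rule sum.reindex_bij_betw)
    show "bij_betw (\<lambda>p. insert (fst p) (snd p)) (Sigma Kv (\<lambda>k. PMs (V - {ea E k, eb E k}) E)) (PMs V E)"
    proof (rule bij_betw_imageI)
      show "inj_on (\<lambda>p. insert (fst p) (snd p)) (Sigma Kv (\<lambda>k. PMs (V - {ea E k, eb E k}) E))"
      proof (rule inj_onI)
        fix p q assume p: "p \<in> Sigma Kv (\<lambda>k. PMs (V - {ea E k, eb E k}) E)"
          and q: "q \<in> Sigma Kv (\<lambda>k. PMs (V - {ea E k, eb E k}) E)"
          and eq: "insert (fst p) (snd p) = insert (fst q) (snd q)"
        obtain k1 S1 where p': "p = (k1, S1)" by (cases p)
        obtain k2 S2 where q': "q = (k2, S2)" by (cases q)
        have k1: "k1 \<in> Kv" "S1 \<in> PMs (V - {ea E k1, eb E k1}) E" using p p' by auto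
        have k2: "k2 \<in> Kv" "S2 \<in> PMs (V - {ea E k2, eb E k2}) E" using q q' by auto
        have n1: "\<forall>j\<in>S1. ea E j \<noteq> v \<and> eb E j \<noteq> v"
          using k1 by (auto simp: PMs_iff Kv_def)
        have n2: "\<forall>j\<in>S2. ea E j \<noteq> v \<and> eb E j \<noteq> v"
          using k2 by (auto simp: PMs_iff Kv_def)
        have c1: "ea E k1 = v \<or> eb E k1 = v" using k1 by (auto simp: Kv_def)
        have c2: "ea E k2 = v \<or> eb E k2 = v" using k2 by (auto simp: Kv_def)
        have "k1 \<in> insert k2 S2" using eq p' q' by auto
        then have kk: "k1 = k2" using n2 c1 by auto
        have "k1 \<notin> S1" using n1 c1 by auto
        moreover have "k2 \<notin> S2" using n2 c2 by auto
        ultimately have "S1 = S2" using eq p' q' kk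
          by (metis fst_conv snd_conv insert_ident)
        then show "p = q" using p' q' kk by simp
      qed
      show "(\<lambda>p. insert (fst p) (snd p)) ` Sigma Kv (\<lambda>k. PMs (V - {ea E k, eb E k}) E) = PMs V E"
      proof
        show "(\<lambda>p. insert (fst p) (snd p)) ` Sigma Kv (\<lambda>k. PMs (V - {ea E k, eb E k}) E) \<subseteq> PMs V E"
        proof clarsimp
          fix k S' assume "k \<in> Kv" "S' \<in> PMs (V - {ea E k, eb E k}) E"
          then show "insert k S' \<in> PMs V E" using v by (intro insert_pm(1)) (auto simp: Kv_def)
        qed
        show "PMs V E \<subseteq> (\<lambda>p. insert (fst p) (snd p)) ` Sigma Kv (\<lambda>k. PMs (V - {ea E k, eb E k}) E)"
        proof
          fix S assume S: "S \<in> PMs V E"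
          obtain k where k: "k \<in> S" "ea E k = v \<or> eb E k = v"
            "S - {k} \<in> PMs (V - {ea E k, eb E k}) E"
            using split_pm[OF S v] by blast
          have "k \<in> Kv" using S k by (auto simp: PMs_iff Kv_def)
          moreover have "S = insert k (S - {k})" using k by auto
          ultimately show "S \<in> (\<lambda>p. insert (fst p) (snd p)) ` Sigma Kv (\<lambda>k. PMs (V - {ea E k, eb E k}) E)"
            using k(3) by (intro image_eqI[where x="(k, S - {k})"]) auto
        qed
      qed
    qed
  qed
  also have "\<dots> = M V" by (simp add: M_def Msum_PMs)
  finally show ?thesis by (simp add: M_def)
qed

definition grid :: "(nat \<Rightarrow> int) \<Rightarrow> vertex \<Rightarrow> vertex \<Rightarrow> int" where
  "grid \<sigma> v u = (if fst v = fst u \<and> (snd u = snd v + 1 \<or> snd v = snd u + 1) then 1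
     else if snd v = snd u \<and> (fst u = fst v + 1 \<or> fst v = fst u + 1) then \<sigma> (snd v) else 0)"

definition HW :: "nat \<Rightarrow> nat \<Rightarrow> (nat \<Rightarrow> int) \<Rightarrow> sedge list \<Rightarrow> bool" where
  "HW m w \<sigma> E \<longleftrightarrow> (\<forall>v\<in>{1..m}\<times>{1..w}. \<forall>u\<in>{1..m}\<times>{1..w}. v \<noteq> u \<longrightarrow> Wt E v u = grid \<sigma> v u)"

definition Vs :: "nat \<Rightarrow> nat \<Rightarrow> nat \<Rightarrow> nat set \<Rightarrow> nat set \<Rightarrow> vertex set" where
  "Vs m w j R S = R \<times> {j} \<union> S \<times> {Suc j} \<union> {1..m} \<times> {j+2..w}"

definition efull :: "nat \<Rightarrow> nat set \<Rightarrow> int" where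
  "efull m X = (if X = {1..m} then 1 else 0)"

lemma sum_two:
  assumes "finite A" "a \<noteq> b" "\<forall>u\<in>A. u \<noteq> a \<and> u \<noteq> b \<longrightarrow> f u = 0"
  shows "sum f A = (if a \<in> A then f a else 0) + (if b \<in> A then f b else 0)"
proof -
  have "sum f A = sum f (A \<inter> {a, b})"
    using assms by (intro sum.mono_neutral_right) auto
  also have "\<dots> = (if a \<in> A then f a else 0) + (if b \<in> A then f b else 0)"
  proof (cases "a \<in> A")
    case True
    show ?thesis
    proof (cases "b \<in> A")
      case True2: True
      then have "A \<inter> {a, b} = {a, b}" using True by auto
      then show ?thesis using True True2 assms(2) by simp
    next
      case False
      then have "A \<inter> {a, b} = {a}" using True by auto
      then show ?thesis using True False by simp
    qed
  next
    case False
    show ?thesis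
    proof (cases "b \<in> A")
      case True2: True
      then have "A \<inter> {a, b} = {b}" using False by auto
      then show ?thesis using False True2 by simp
    next
      case False2: False
      then have "A \<inter> {a, b} = {}" using False by auto
      then show ?thesis using False False2 by simp
    qed
  qed
  finally show ?thesis .
qed

lemma col_rhs:
  fixes G :: "nat set \<Rightarrow> int"
  assumes fR: "finite R" and i: "i \<in> R" "\<forall>x\<in>R. i \<le> x"
  shows "(\<Sum>B\<in>Pow (R \<inter> S). D s (R - B) * G (S - B)) =
    (if i \<in> S then (\<Sum>B\<in>Pow ((R - {i}) \<inter> (S - {i})). D s ((R - {i}) - B) * G ((S - {i}) - B)) else 0)
    + (if i + 1 \<in> R then s * (\<Sum>B\<in>Pow ((R - {i, i+1}) \<inter> S). D s ((R - {i, i+1}) - B) * G (S - B)) else 0)"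
proof -
  define A0 where "A0 = (R \<inter> S) - {i}"
  define A1 where "A1 = (R - {i, i+1}) \<inter> S"
  have fA0: "finite A0" using fR by (simp add: A0_def)
  have iA0: "i \<notin> A0" by (simp add: A0_def)
  have P: "(\<Sum>B\<in>Pow A0. D s (R - B) * G (S - B)) =
     (if i + 1 \<in> R then s * (\<Sum>B\<in>Pow A1. D s ((R - {i, i+1}) - B) * G (S - B)) else 0)"
  proof -
    have t: "D s (R - B) * G (S - B) = (if i + 1 \<in> R - B then s * (D s ((R - {i, i+1}) - B) * G (S - B)) else 0)"
      if B: "B \<in> Pow A0" for B
    proof -
      have "i \<in> R - B" using B i by (auto simp: A0_def)
      then have "D s (R - B) = (if i + 1 \<in> R - B then s * D s (R - B - {i, i+1}) else 0)"
        using fR i by (intro D_min) auto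
      moreover have "R - B - {i, i+1} = (R - {i, i+1}) - B" by auto
      ultimately show ?thesis by simp
    qed
    have "(\<Sum>B\<in>Pow A0. D s (R - B) * G (S - B)) =
      (\<Sum>B\<in>Pow A0. if i + 1 \<in> R - B then s * (D s ((R - {i, i+1}) - B) * G (S - B)) else 0)"
      using t by (rule sum.cong[OF refl])
    also have "\<dots> = (\<Sum>B\<in>Pow A1. if i + 1 \<in> R - B then s * (D s ((R - {i, i+1}) - B) * G (S - B)) else 0)"
    proof (rule sum.mono_neutral_right)
      show "Pow A1 \<subseteq> Pow A0" by (auto simp: A0_def A1_def)
      show "\<forall>B\<in>Pow A0 - Pow A1. (if i + 1 \<in> R - B then s * (D s ((R - {i, i+1}) - B) * G (S - B)) else 0) = 0"
        by (auto simp: A0_def A1_def)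
    qed (use fA0 in auto)
    also have "\<dots> = (if i + 1 \<in> R then s * (\<Sum>B\<in>Pow A1. D s ((R - {i, i+1}) - B) * G (S - B)) else 0)"
    proof (cases "i + 1 \<in> R")
      case True
      have "(\<Sum>B\<in>Pow A1. if i + 1 \<in> R - B then s * (D s ((R - {i, i+1}) - B) * G (S - B)) else 0)
        = (\<Sum>B\<in>Pow A1. s * (D s ((R - {i, i+1}) - B) * G (S - B)))"
        using True by (intro sum.cong) (auto simp: A1_def)
      then show ?thesis using True by (simp add: sum_distrib_left)
    qed simp
    finally show ?thesis .
  qed
  have Q: "(\<Sum>B\<in>Pow A0. D s (R - insert i B) * G (S - insert i B)) =
     (\<Sum>B\<in>Pow ((R - {i}) \<inter> (S - {i})). D s ((R - {i}) - B) * G ((S - {i}) - B))"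
  proof -
    have A0e: "A0 = (R - {i}) \<inter> (S - {i})" by (auto simp: A0_def)
    show ?thesis unfolding A0e
    proof (rule sum.cong[OF refl])
      fix B
      show "D s (R - insert i B) * G (S - insert i B) = D s ((R - {i}) - B) * G ((S - {i}) - B)"
        by (metis Diff_insert2)
    qed
  qed
  show ?thesis
  proof (cases "i \<in> S")
    case True
    have RS: "R \<inter> S = insert i A0" using i True by (auto simp: A0_def)
    have eq: "(\<Sum>B\<in>Pow (R \<inter> S). D s (R - B) * G (S - B)) =
       (\<Sum>B\<in>Pow A0. D s (R - B) * G (S - B)) + (\<Sum>B\<in>Pow A0. D s (R - insert i B) * G (S - insert i B))"
      unfolding RS by (rule sum_Pow_insert[OF fA0 iA0])
    show ?thesis unfolding eq P Q A1_def using True by (simp add: add.commute)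
  next
    case False
    have RS: "R \<inter> S = A0" using False by (auto simp: A0_def)
    show ?thesis unfolding RS P A1_def using False by simp
  qed
qed

lemma HW_D: "HW m w \<sigma> E \<Longrightarrow> v \<in> {1..m} \<times> {1..w} \<Longrightarrow> u \<in> {1..m} \<times> {1..w} \<Longrightarrow> v \<noteq> u
  \<Longrightarrow> Wt E v u = grid \<sigma> v u"
  unfolding HW_def by blast

lemma col_lemma:
  assumes hw: "HW m w \<sigma> E" and nl: "noloop E"
  shows "1 \<le> j \<Longrightarrow> j \<le> w \<Longrightarrow> R \<subseteq> {1..m} \<Longrightarrow> S \<subseteq> {1..m} \<Longrightarrow> (j < w \<or> S = {}) \<Longrightarrow>
    Msum (Vs m w j R S, E) = (\<Sum>B\<in>Pow (R \<inter> S). D (\<sigma> j) (R - B) * Msum (Vs m w j {} (S - B), E))"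
proof (induction "card R" arbitrary: R S rule: less_induct)
  case less
  note j = less.prems(1,2) and RS = less.prems(3,4) and jS = less.prems(5)
  have fR: "finite R" using RS finite_subset by blast
  show ?case
  proof (cases "R = {}")
    case True then show ?thesis by simp
  next
    case False
    define i where "i = Min R"
    have iR: "i \<in> R" and imin: "\<forall>x\<in>R. i \<le> x" using False fR by (auto simp: i_def)
    have i1: "1 \<le> i" using iR RS by auto
    define V where "V = Vs m w j R S"
    define v where "v = (i, j)"
    have vV: "v \<in> V" using iR by (simp add: V_def Vs_def v_def)
    have Vsub: "V \<subseteq> {1..m} \<times> {1..w}" using RS jS j by (auto simp: V_def Vs_def)
    have fV: "finite V" using Vsub finite_subset by blast
    define a where "a = (i, Suc j)"
    define b where "b = (i + 1, j)"
    have ab: "a \<noteq> b" by (simp add: a_def b_def)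
    have Mexp: "Msum (V, E) = (\<Sum>u\<in>V - {v}. Wt E v u * Msum (V - {v, u}, E))"
      by (rule expand[OF fV vV nl])
    have zero: "\<forall>u\<in>V - {v}. u \<noteq> a \<and> u \<noteq> b \<longrightarrow> Wt E v u * Msum (V - {v, u}, E) = 0"
    proof (intro ballI impI)
      fix u assume u: "u \<in> V - {v}" "u \<noteq> a \<and> u \<noteq> b"
      have "v \<in> {1..m} \<times> {1..w}" "u \<in> {1..m} \<times> {1..w}" "v \<noteq> u" using u vV Vsub by auto
      then have "Wt E v u = grid \<sigma> v u" by (rule HW_D[OF hw])
      also have "\<dots> = 0"
      proof -
        obtain p q where uq: "u = (p, q)" by (cases u)
        have "(p, q) \<in> V" using u uq by simp
        then have pq: "(q = j \<and> p \<in> R) \<or> (q = Suc j \<and> p \<in> S) \<or> (p \<in> {1..m} \<and> j + 2 \<le> q)"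
          by (auto simp: V_def Vs_def)
        show ?thesis using u uq pq imin i1 by (auto simp: grid_def v_def a_def b_def)
      qed
      finally show "Wt E v u * Msum (V - {v, u}, E) = 0" by simp
    qed
    have aV: "(a \<in> V - {v}) = (i \<in> S)" by (auto simp: a_def v_def V_def Vs_def)
    have bV: "(b \<in> V - {v}) = (i + 1 \<in> R)" by (auto simp: b_def v_def V_def Vs_def)
    have Wa: "Wt E v a = 1" if iS: "i \<in> S"
    proof -
      have "v \<in> {1..m} \<times> {1..w}" "a \<in> {1..m} \<times> {1..w}" "v \<noteq> a" using vV Vsub aV iS by auto
      then have "Wt E v a = grid \<sigma> v a" by (rule HW_D[OF hw])
      then show ?thesis by (simp add: grid_def a_def v_def)
    qed
    have Wb: "Wt E v b = \<sigma> j" if iR1: "i + 1 \<in> R"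
    proof -
      have "v \<in> {1..m} \<times> {1..w}" "b \<in> {1..m} \<times> {1..w}" "v \<noteq> b" using vV Vsub bV iR1 by auto
      then have "Wt E v b = grid \<sigma> v b" by (rule HW_D[OF hw])
      then show ?thesis by (simp add: grid_def b_def v_def)
    qed
    have Va: "V - {v, a} = Vs m w j (R - {i}) (S - {i})"
      by (auto simp: V_def Vs_def v_def a_def)
    have Vb: "V - {v, b} = Vs m w j (R - {i, i+1}) S"
      by (auto simp: V_def Vs_def v_def b_def)
    have cR1: "card (R - {i}) < card R" using fR iR by (rule card_Diff1_less)
    have cR2: "card (R - {i, i+1}) < card R"
    proof -
      have "card (R - {i, i+1}) \<le> card (R - {i})" using fR by (intro card_mono) auto
      then show ?thesis using cR1 by simp
    qed
    have IH1: "i \<in> S \<Longrightarrow> Msum (Vs m w j (R - {i}) (S - {i}), E) =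
       (\<Sum>B\<in>Pow ((R - {i}) \<inter> (S - {i})). D (\<sigma> j) ((R - {i}) - B) * Msum (Vs m w j {} ((S - {i}) - B), E))"
      using less.hyps[OF cR1, of "S - {i}"] j RS jS by auto
    have IH2: "Msum (Vs m w j (R - {i, i+1}) S, E) =
       (\<Sum>B\<in>Pow ((R - {i, i+1}) \<inter> S). D (\<sigma> j) ((R - {i, i+1}) - B) * Msum (Vs m w j {} (S - B), E))"
      using less.hyps[OF cR2, of S] j RS jS by auto
    have "Msum (Vs m w j R S, E) = Msum (V, E)" by (simp add: V_def)
    also have "\<dots> = (if a \<in> V - {v} then Wt E v a * Msum (V - {v, a}, E) else 0) +
        (if b \<in> V - {v} then Wt E v b * Msum (V - {v, b}, E) else 0)"
      unfolding Mexp using fV ab zero by (intro sum_two) auto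
    also have "\<dots> = (if i \<in> S then Msum (Vs m w j (R - {i}) (S - {i}), E) else 0) +
        (if i + 1 \<in> R then \<sigma> j * Msum (Vs m w j (R - {i, i+1}) S, E) else 0)"
      using Wa Wb aV bV Va Vb by simp
    also have "\<dots> = (\<Sum>B\<in>Pow (R \<inter> S). D (\<sigma> j) (R - B) * Msum (Vs m w j {} (S - B), E))"
      using col_rhs[OF fR iR imin, where S=S and s="\<sigma> j" and G="\<lambda>X. Msum (Vs m w j {} X, E)"] IH1 IH2
      by simp
    finally show ?thesis .
  qed
qed

lemma F_lemma:
  assumes hw: "HW m w \<sigma> E" and nl: "noloop E"
  shows "1 \<le> j \<Longrightarrow> j \<le> w \<Longrightarrow> R \<subseteq> {1..m} \<Longrightarrow>
    Msum (R \<times> {j} \<union> {1..m} \<times> {j+1..w}, E) = prog m (map \<sigma> [j..<w+1]) (efull m) R"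
proof (induction "w - j" arbitrary: j R)
  case 0
  then have jw: "j = w" by simp
  have fR: "finite R" using 0 finite_subset by blast
  have "Msum (R \<times> {j} \<union> {1..m} \<times> {j+1..w}, E) = Msum (Vs m w j R {}, E)"
    using jw by (simp add: Vs_def)
  also have "\<dots> = D (\<sigma> j) R"
    using col_lemma[OF hw nl, of j R "{}"] 0 jw by (simp add: Vs_def Msum_empty)
  also have "\<dots> = (\<Sum>B\<in>Pow R. if B = {} then D (\<sigma> j) (R - B) else 0)" using fR by simp
  also have "\<dots> = (\<Sum>B\<in>Pow R. D (\<sigma> j) (R - B) * efull m ({1..m} - B))"
  proof (rule sum.cong[OF refl])
    fix B assume "B \<in> Pow R"
    then have "({1..m} - B = {1..m}) = (B = {})" using 0 by auto
    then show "(if B = {} then D (\<sigma> j) (R - B) else 0) = D (\<sigma> j) (R - B) * efull m ({1..m} - B)"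
      by (simp add: efull_def)
  qed
  also have "\<dots> = prog m (map \<sigma> [j..<w+1]) (efull m) R"
    using jw by (simp add: step_def)
  finally show ?case .
next
  case (Suc k)
  then have jw: "j < w" by simp
  have IH: "Msum (X \<times> {Suc j} \<union> {1..m} \<times> {Suc j+1..w}, E) = prog m (map \<sigma> [Suc j..<w+1]) (efull m) X"
    if "X \<subseteq> {1..m}" for X
  proof -
    have "k = w - Suc j" "1 \<le> Suc j" "Suc j \<le> w" using Suc.hyps(2) jw by auto
    from Suc.hyps(1)[OF this that] show ?thesis by simp
  qed
  have "Msum (R \<times> {j} \<union> {1..m} \<times> {j+1..w}, E) = Msum (Vs m w j R {1..m}, E)"
  proof -
    have "R \<times> {j} \<union> {1..m} \<times> {j+1..w} = Vs m w j R {1..m}"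
      using jw by (auto simp: Vs_def)
    then show ?thesis by simp
  qed
  also have "\<dots> = (\<Sum>B\<in>Pow (R \<inter> {1..m}). D (\<sigma> j) (R - B) * Msum (Vs m w j {} ({1..m} - B), E))"
    using col_lemma[OF hw nl, of j R "{1..m}"] Suc.prems jw by simp
  also have "\<dots> = (\<Sum>B\<in>Pow R. D (\<sigma> j) (R - B) * prog m (map \<sigma> [Suc j..<w+1]) (efull m) ({1..m} - B))"
  proof -
    have "R \<inter> {1..m} = R" using Suc.prems by auto
    moreover have "Vs m w j {} X = X \<times> {Suc j} \<union> {1..m} \<times> {Suc j+1..w}" for X
      by (simp add: Vs_def)
    ultimately show ?thesis using IH by simp
  qed
  also have "\<dots> = prog m (map \<sigma> [j..<w+1]) (efull m) R"
    using jw by (simp add: upt_conv_Cons step_def)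
  finally show ?case .
qed

lemma Msum_grid:
  assumes hw: "HW m w \<sigma> E" and nl: "noloop E" and w: "1 \<le> w"
  shows "Msum ({1..m} \<times> {1..w}, E) = prog m (map \<sigma> [1..<w+1]) (efull m) {1..m}"
proof -
  have "{1..m} \<times> {1..w} = {1..m} \<times> {1} \<union> {1..m} \<times> {1+1..w}" using w by auto
  then show ?thesis using F_lemma[OF hw nl, of 1 "{1..m}"] w by simp
qed

definition wf :: "vertex \<Rightarrow> vertex \<Rightarrow> sedge \<Rightarrow> int" where
  "wf v u e = (if (fst e = v \<and> fst (snd e) = u) \<or> (fst e = u \<and> fst (snd e) = v) then snd (snd e) else 0)"

lemma Wt_list: "Wt E v u = sum_list (map (wf v u) E)"
  unfolding Wt_def ea_def eb_def sg_def wf_def by (simp add: sum_list_sum_nth atLeast0LessThan)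

lemma Wt_append: "Wt (E1 @ E2) v u = Wt E1 v u + Wt E2 v u"
  by (simp add: Wt_list)

lemma sum_list_upt_sum: "sum_list (map f [a..<b]) = sum f {a..<b}"
  by (simp add: sum_set_upt_conv_sum_list_nat[symmetric])

lemma sum_list_comp2: "sum_list (map F [e i j. i \<leftarrow> xs, j \<leftarrow> ys]) = (\<Sum>i\<leftarrow>xs. \<Sum>j\<leftarrow>ys. F (e i j))"
  by (induction xs) (simp_all add: comp_def)

lemma delta2:
  assumes "finite A" "finite B"
  shows "(\<Sum>i\<in>A. \<Sum>j\<in>B. if i = x \<and> j = y then c else 0) = (if x \<in> A \<and> y \<in> B then c else (0::int))"
proof -
  have "(\<Sum>i\<in>A. \<Sum>j\<in>B. if i = x \<and> j = y then c else 0) = (\<Sum>i\<in>A. if i = x then (\<Sum>j\<in>B. if j = y then c else 0) else 0)"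
    by (rule sum.cong) auto
  also have "\<dots> = (if x \<in> A \<and> y \<in> B then c else 0)" using assms by simp
  finally show ?thesis .
qed

lemma Wt_horiz: "Wt (horiz_edges m w) (i0, c0) (i1, c1) =
  (if i0 = i1 \<and> 1 \<le> i0 \<and> i0 \<le> m \<and> ((c1 = c0 + 1 \<and> 1 \<le> c0 \<and> c0 < w) \<or> (c0 = c1 + 1 \<and> 1 \<le> c1 \<and> c1 < w)) then 1 else 0)"
proof -
  have "Wt (horiz_edges m w) (i0, c0) (i1, c1) =
     (\<Sum>i\<in>{1..<m+1}. \<Sum>j\<in>{1..<w}. wf (i0, c0) (i1, c1) ((i, j), (i, j+1), 1))"
    unfolding Wt_list horiz_edges_def sum_list_comp2 sum_list_upt_sum by simp
  also have "\<dots> = (\<Sum>i\<in>{1..<m+1}. \<Sum>j\<in>{1..<w}.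
      (if i = i0 \<and> j = c0 then (if i0 = i1 \<and> c1 = c0 + 1 then 1 else 0) else 0) +
      (if i = i0 \<and> j = c1 then (if i0 = i1 \<and> c0 = c1 + 1 then 1 else 0) else 0))"
    by (intro sum.cong refl) (auto simp: wf_def)
  also have "\<dots> = (if i0 \<in> {1..<m+1} \<and> c0 \<in> {1..<w} then (if i0 = i1 \<and> c1 = c0 + 1 then 1 else 0) else 0) +
      (if i0 \<in> {1..<m+1} \<and> c1 \<in> {1..<w} then (if i0 = i1 \<and> c0 = c1 + 1 then 1 else 0) else 0)"
    by (simp only: sum.distrib delta2 finite_atLeastLessThan)
  also have "\<dots> = (if i0 = i1 \<and> 1 \<le> i0 \<and> i0 \<le> m \<and> ((c1 = c0 + 1 \<and> 1 \<le> c0 \<and> c0 < w) \<or> (c0 = c1 + 1 \<and> 1 \<le> c1 \<and> c1 < w)) then 1 else 0)"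
    by auto
  finally show ?thesis .
qed

lemma Wt_vert: "Wt (vert_edges m [lo..<hi] s) (i0, c0) (i1, c1) =
  (if c0 = c1 \<and> lo \<le> c0 \<and> c0 < hi \<and> ((i1 = i0 + 1 \<and> 1 \<le> i0 \<and> i0 < m) \<or> (i0 = i1 + 1 \<and> 1 \<le> i1 \<and> i1 < m)) then s else 0)"
proof -
  have "Wt (vert_edges m [lo..<hi] s) (i0, c0) (i1, c1) =
     (\<Sum>i\<in>{1..<m}. \<Sum>j\<in>{lo..<hi}. wf (i0, c0) (i1, c1) ((i, j), (i+1, j), s))"
    unfolding Wt_list vert_edges_def sum_list_comp2 sum_list_upt_sum by simp
  also have "\<dots> = (\<Sum>i\<in>{1..<m}. \<Sum>j\<in>{lo..<hi}.
      (if i = i0 \<and> j = c0 then (if c0 = c1 \<and> i1 = i0 + 1 then s else 0) else 0) +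
      (if i = i1 \<and> j = c1 then (if c0 = c1 \<and> i0 = i1 + 1 then s else 0) else 0))"
    by (intro sum.cong refl) (auto simp: wf_def)
  also have "\<dots> = (if i0 \<in> {1..<m} \<and> c0 \<in> {lo..<hi} then (if c0 = c1 \<and> i1 = i0 + 1 then s else 0) else 0) +
      (if i1 \<in> {1..<m} \<and> c1 \<in> {lo..<hi} then (if c0 = c1 \<and> i0 = i1 + 1 then s else 0) else 0)"
    by (simp only: sum.distrib delta2 finite_atLeastLessThan)
  also have "\<dots> = (if c0 = c1 \<and> lo \<le> c0 \<and> c0 < hi \<and> ((i1 = i0 + 1 \<and> 1 \<le> i0 \<and> i0 < m) \<or> (i0 = i1 + 1 \<and> 1 \<le> i1 \<and> i1 < m)) then s else 0)"
    by auto
  finally show ?thesis .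
qed

lemma Wt_conn: "Wt [((i, w), (i, w+1), 1). i \<leftarrow> [1..<m+1]] (i0, c0) (i1, c1) =
  (if i0 = i1 \<and> 1 \<le> i0 \<and> i0 \<le> m \<and> ((c0 = w \<and> c1 = w + 1) \<or> (c1 = w \<and> c0 = w + 1)) then 1 else 0)"
proof -
  have "Wt [((i, w), (i, w+1), 1). i \<leftarrow> [1..<m+1]] (i0, c0) (i1, c1) =
     (\<Sum>i\<in>{1..<m+1}. wf (i0, c0) (i1, c1) ((i, w), (i, w+1), 1))"
    unfolding Wt_list sum_list_upt_sum[symmetric] by (simp add: comp_def)
  also have "\<dots> = (\<Sum>i\<in>{1..<m+1}.
      (if i = i0 then (if i0 = i1 \<and> c0 = w \<and> c1 = w + 1 then 1 else 0) else 0) +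
      (if i = i0 then (if i0 = i1 \<and> c1 = w \<and> c0 = w + 1 then 1 else 0) else 0))"
    by (intro sum.cong refl) (auto simp: wf_def)
  also have "\<dots> = (if i0 = i1 \<and> 1 \<le> i0 \<and> i0 \<le> m \<and> ((c0 = w \<and> c1 = w + 1) \<or> (c1 = w \<and> c0 = w + 1)) then 1 else 0)"
    by (simp add: sum.distrib)
  finally show ?thesis .
qed

lemma sum_list_if: "sum_list (map (\<lambda>e. if P then f e else 0) E) = (if P then sum_list (map f E) else (0::int))"
  by (induction E) auto

definition shE :: "nat \<Rightarrow> sedge \<Rightarrow> sedge" where
  "shE w = (\<lambda>(u, v, s). (shift_v w u, shift_v w v, s))"

lemma Wt_shift:
  assumes "\<forall>e\<in>set E. 1 \<le> snd (fst e) \<and> 1 \<le> snd (fst (snd e))"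
  shows "Wt (map (shE w) E) (i0, c0) (i1, c1) = (if w < c0 \<and> w < c1 then Wt E (i0, c0 - w) (i1, c1 - w) else 0)"
proof -
  have pt: "wf (i0, c0) (i1, c1) (shE w e) = (if w < c0 \<and> w < c1 then wf (i0, c0 - w) (i1, c1 - w) e else 0)"
    if "e \<in> set E" for e
  proof -
    obtain a b c d s where e: "e = ((a, b), (c, d), s)" by (cases e) auto
    have "1 \<le> b" "1 \<le> d" using assms that e by auto
    have cond: "((a, b + w) = (i0, c0) \<and> (c, d + w) = (i1, c1) \<or> (a, b + w) = (i1, c1) \<and> (c, d + w) = (i0, c0))
       \<longleftrightarrow> (w < c0 \<and> w < c1 \<and> ((a, b) = (i0, c0 - w) \<and> (c, d) = (i1, c1 - w) \<or> (a, b) = (i1, c1 - w) \<and> (c, d) = (i0, c0 - w)))"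
      using \<open>1 \<le> b\<close> \<open>1 \<le> d\<close> by (simp only: prod.inject) arith
    show ?thesis unfolding e wf_def shE_def shift_v_def
      by (simp only: split_conv fst_conv snd_conv cond) simp
  qed
  have "Wt (map (shE w) E) (i0, c0) (i1, c1) =
      sum_list (map (\<lambda>e. if w < c0 \<and> w < c1 then wf (i0, c0 - w) (i1, c1 - w) e else 0) E)"
    unfolding Wt_list map_map comp_def
    by (rule arg_cong[where f=sum_list], rule map_cong[OF refl], rule pt)
  also have "\<dots> = (if w < c0 \<and> w < c1 then Wt E (i0, c0 - w) (i1, c1 - w) else 0)"
    by (simp only: sum_list_if Wt_list)
  finally show ?thesis .
qed

definition sgrid :: "nat \<Rightarrow> nat \<Rightarrow> nat \<Rightarrow> nat \<Rightarrow> int \<Rightarrow> sgraph" where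
  "sgrid m w lo hi s = (grid_vertices m w, horiz_edges m w @ vert_edges m [lo..<hi] s)"

definition sig :: "nat \<Rightarrow> nat \<Rightarrow> int \<Rightarrow> nat \<Rightarrow> int" where
  "sig lo hi s c = (if lo \<le> c \<and> c < hi then s else 0)"

definition conn :: "nat \<Rightarrow> nat \<Rightarrow> sedge list" where
  "conn m w = [((i, w), (i, w+1), 1). i \<leftarrow> [1..<m+1]]"

lemma Gmn_pos: "n \<ge> 1 \<Longrightarrow> Gmn m n = sgrid m (nat n) 1 (nat n + 1) 1"
  by (simp add: Gmn_def sgrid_def)

lemma Gmn_nonpos: "n \<le> 0 \<Longrightarrow> Gmn m n = sgrid m (nat (2 - n)) 2 (nat (1 - n) + 1) (-1)"
  by (simp add: Gmn_def sgrid_def)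

lemma width_sgrid: "1 \<le> m \<Longrightarrow> 1 \<le> w \<Longrightarrow> width (sgrid m w lo hi s) = w"
proof -
  assume "1 \<le> m" "1 \<le> w"
  then have img: "snd ` ({1..m} \<times> {1..w}) = {1..w}" by force
  have mx: "Max {1..w} = w" using \<open>1 \<le> w\<close> by (intro Max_eqI) auto
  show ?thesis by (simp only: width_def sgrid_def grid_vertices_def fst_conv img mx)
qed

lemma noloop_set: "noloop E \<longleftrightarrow> (\<forall>e\<in>set E. fst e \<noteq> fst (snd e))"
  unfolding noloop_def ea_def eb_def
proof
  assume H: "\<forall>k<length E. fst (E ! k) \<noteq> fst (snd (E ! k))"
  show "\<forall>e\<in>set E. fst e \<noteq> fst (snd e)"
  proof
    fix e assume "e \<in> set E"
    then obtain k where "k < length E" "E ! k = e" by (auto simp: in_set_conv_nth)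
    then show "fst e \<noteq> fst (snd e)" using H by auto
  qed
next
  assume H: "\<forall>e\<in>set E. fst e \<noteq> fst (snd e)"
  show "\<forall>k<length E. fst (E ! k) \<noteq> fst (snd (E ! k))"
    using H nth_mem by blast
qed

lemma nl_horiz: "\<forall>e\<in>set (horiz_edges m w). fst e \<noteq> fst (snd e)"
  by (auto simp: horiz_edges_def)

lemma nl_vert: "\<forall>e\<in>set (vert_edges m cols s). fst e \<noteq> fst (snd e)"
  by (auto simp: vert_edges_def)

lemma nl_conn: "\<forall>e\<in>set (conn m w). fst e \<noteq> fst (snd e)"
  by (auto simp: conn_def)

lemma nl_shift: "\<forall>e\<in>set E. fst e \<noteq> fst (snd e) \<Longrightarrow> \<forall>e\<in>set (map (shE w) E). fst e \<noteq> fst (snd e)"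
  by (auto simp: shE_def shift_v_def split: prod.splits)

lemma col_pos: "1 \<le> lo \<Longrightarrow> \<forall>e\<in>set (horiz_edges m w @ vert_edges m [lo..<hi] s). 1 \<le> snd (fst e) \<and> 1 \<le> snd (fst (snd e))"
  by (auto simp: horiz_edges_def vert_edges_def)

lemma HW_single:
  assumes lo: "1 \<le> lo" and hi: "hi \<le> w + 1"
  shows "HW m w (sig lo hi s) (horiz_edges m w @ vert_edges m [lo..<hi] s)"
  unfolding HW_def
proof (intro ballI impI)
  fix v u assume v: "v \<in> {1..m} \<times> {1..w}" and u: "u \<in> {1..m} \<times> {1..w}" and vu: "v \<noteq> u"
  obtain i0 c0 where v': "v = (i0, c0)" by (cases v)
  obtain i1 c1 where u': "u = (i1, c1)" by (cases u)
  have b: "1 \<le> i0" "i0 \<le> m" "1 \<le> c0" "c0 \<le> w" "1 \<le> i1" "i1 \<le> m" "1 \<le> c1" "c1 \<le> w"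
    using v u v' u' by auto
  have h: "Wt (horiz_edges m w) v u = (if i0 = i1 \<and> (c1 = c0 + 1 \<or> c0 = c1 + 1) then 1 else 0)"
  proof -
    have "(i0 = i1 \<and> 1 \<le> i0 \<and> i0 \<le> m \<and> ((c1 = c0 + 1 \<and> 1 \<le> c0 \<and> c0 < w) \<or> (c0 = c1 + 1 \<and> 1 \<le> c1 \<and> c1 < w)))
       \<longleftrightarrow> (i0 = i1 \<and> (c1 = c0 + 1 \<or> c0 = c1 + 1))" using b by arith
    then show ?thesis unfolding v' u' Wt_horiz by simp
  qed
  have vt: "Wt (vert_edges m [lo..<hi] s) v u = (if c0 = c1 \<and> (i1 = i0 + 1 \<or> i0 = i1 + 1) then sig lo hi s c0 else 0)"
  proof -
    have "((i1 = i0 + 1 \<and> 1 \<le> i0 \<and> i0 < m) \<or> (i0 = i1 + 1 \<and> 1 \<le> i1 \<and> i1 < m))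
       \<longleftrightarrow> (i1 = i0 + 1 \<or> i0 = i1 + 1)" using b by arith
    then show ?thesis unfolding v' u' Wt_vert sig_def by auto
  qed
  show "Wt (horiz_edges m w @ vert_edges m [lo..<hi] s) v u = grid (sig lo hi s) v u"
    unfolding Wt_append h vt unfolding v' u' grid_def by auto
qed

lemma adj_vertices:
  assumes "1 \<le> m" "1 \<le> w1"
  shows "fst (adjoin m (sgrid m w1 lo1 hi1 s1) (sgrid m w2 lo2 hi2 s2)) = {1..m} \<times> {1..w1 + w2}"
proof -
  have "grid_vertices m w1 \<union> shift_v w1 ` grid_vertices m w2 = {1..m} \<times> {1..w1 + w2}"
  proof (rule set_eqI)
    fix x :: vertex
    obtain i c where x: "x = (i, c)" by (cases x)
    show "x \<in> grid_vertices m w1 \<union> shift_v w1 ` grid_vertices m w2 \<longleftrightarrow> x \<in> {1..m} \<times> {1..w1 + w2}"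
    proof
      assume "x \<in> grid_vertices m w1 \<union> shift_v w1 ` grid_vertices m w2"
      then show "x \<in> {1..m} \<times> {1..w1 + w2}"
        by (auto simp: grid_vertices_def shift_v_def)
    next
      assume xi: "x \<in> {1..m} \<times> {1..w1 + w2}"
      show "x \<in> grid_vertices m w1 \<union> shift_v w1 ` grid_vertices m w2"
      proof (cases "c \<le> w1")
        case True then show ?thesis using xi x by (simp add: grid_vertices_def)
      next
        case False
        then have "x = shift_v w1 (i, c - w1)" "(i, c - w1) \<in> grid_vertices m w2"
          using xi x by (auto simp: shift_v_def grid_vertices_def)
        then show ?thesis by blast
      qed
    qed
  qed
  then show ?thesis using assms
    by (simp add: adjoin_def width_sgrid Let_def) (simp add: sgrid_def)
qed

lemma adj_edges:
  assumes "1 \<le> m" "1 \<le> w1"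
  shows "snd (adjoin m (sgrid m w1 lo1 hi1 s1) (sgrid m w2 lo2 hi2 s2)) =
    (horiz_edges m w1 @ vert_edges m [lo1..<hi1] s1) @ map (shE w1) (horiz_edges m w2 @ vert_edges m [lo2..<hi2] s2)
     @ conn m w1"
  using assms by (simp add: adjoin_def width_sgrid Let_def conn_def shE_def) (simp add: sgrid_def)

lemma three_ind:
  assumes "\<not> (A \<and> B)" "\<not> (A \<and> C)" "\<not> (B \<and> C)"
  shows "(if A then 1 else 0) + (if B then 1 else 0) + (if C then 1 else 0) = (if A \<or> B \<or> C then 1 else (0::int))"
  using assms by auto

lemma HW_adj:
  assumes lo1: "1 \<le> lo1" and hi1: "hi1 \<le> w1 + 1" and lo2: "1 \<le> lo2" and hi2: "hi2 \<le> w2 + 1"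
  shows "HW m (w1 + w2) (\<lambda>c. if lo1 \<le> c \<and> c < hi1 then s1 else if lo2 + w1 \<le> c \<and> c < hi2 + w1 then s2 else 0)
    ((horiz_edges m w1 @ vert_edges m [lo1..<hi1] s1) @ map (shE w1) (horiz_edges m w2 @ vert_edges m [lo2..<hi2] s2)
     @ conn m w1)"
  unfolding HW_def
proof (intro ballI impI)
  define \<sigma> where "\<sigma> c = (if lo1 \<le> c \<and> c < hi1 then s1 else if lo2 + w1 \<le> c \<and> c < hi2 + w1 then s2 else 0)" for c
  fix v u assume v: "v \<in> {1..m} \<times> {1..w1 + w2}" and u: "u \<in> {1..m} \<times> {1..w1 + w2}" and vu: "v \<noteq> u"
  obtain i0 c0 where v': "v = (i0, c0)" by (cases v)
  obtain i1 c1 where u': "u = (i1, c1)" by (cases u)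
  have b: "1 \<le> i0" "i0 \<le> m" "1 \<le> c0" "c0 \<le> w1 + w2" "1 \<le> i1" "i1 \<le> m" "1 \<le> c1" "c1 \<le> w1 + w2"
    using v u v' u' by auto
  define iadj where "iadj = (i1 = i0 + 1 \<or> i0 = i1 + 1)"
  have iadj': "((i1 = i0 + 1 \<and> 1 \<le> i0 \<and> i0 < m) \<or> (i0 = i1 + 1 \<and> 1 \<le> i1 \<and> i1 < m)) \<longleftrightarrow> iadj"
    using b unfolding iadj_def by arith
  define A where "A = (i0 = i1 \<and> (c1 = c0 + 1 \<and> c0 < w1 \<or> c0 = c1 + 1 \<and> c1 < w1))"
  define B where "B = (i0 = i1 \<and> (c1 = c0 + 1 \<and> w1 < c0 \<or> c0 = c1 + 1 \<and> w1 < c1))"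
  define C where "C = (i0 = i1 \<and> (c0 = w1 \<and> c1 = w1 + 1 \<or> c1 = w1 \<and> c0 = w1 + 1))"
  have hA: "Wt (horiz_edges m w1) v u = (if A then 1 else 0)"
  proof -
    have "(i0 = i1 \<and> 1 \<le> i0 \<and> i0 \<le> m \<and> ((c1 = c0 + 1 \<and> 1 \<le> c0 \<and> c0 < w1) \<or> (c0 = c1 + 1 \<and> 1 \<le> c1 \<and> c1 < w1)))
       \<longleftrightarrow> A" using b unfolding A_def by arith
    then show ?thesis unfolding v' u' Wt_horiz by simp
  qed
  have hB: "(if w1 < c0 \<and> w1 < c1 then Wt (horiz_edges m w2) (i0, c0 - w1) (i1, c1 - w1) else 0) = (if B then 1 else 0)"
  proof -
    have "(w1 < c0 \<and> w1 < c1 \<and> (i0 = i1 \<and> 1 \<le> i0 \<and> i0 \<le> m \<and> ((c1 - w1 = c0 - w1 + 1 \<and> 1 \<le> c0 - w1 \<and> c0 - w1 < w2) \<or> (c0 - w1 = c1 - w1 + 1 \<and> 1 \<le> c1 - w1 \<and> c1 - w1 < w2))))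
       \<longleftrightarrow> B" using b unfolding B_def by arith
    then show ?thesis unfolding Wt_horiz by auto
  qed
  have hC: "Wt (conn m w1) v u = (if C then 1 else 0)"
  proof -
    have "(i0 = i1 \<and> 1 \<le> i0 \<and> i0 \<le> m \<and> ((c0 = w1 \<and> c1 = w1 + 1) \<or> (c1 = w1 \<and> c0 = w1 + 1))) \<longleftrightarrow> C"
      using b unfolding C_def by arith
    then show ?thesis unfolding v' u' conn_def Wt_conn by simp
  qed
  define hz where "hz = (i0 = i1 \<and> (c1 = c0 + 1 \<or> c0 = c1 + 1))"
  have habc: "(if A then 1 else 0) + (if B then 1 else 0) + (if C then 1 else 0) = (if hz then 1 else (0::int))"
  proof -
    have "\<not> (A \<and> B)" "\<not> (A \<and> C)" "\<not> (B \<and> C)" unfolding A_def B_def C_def by arith+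
    then have "(if A then 1 else 0) + (if B then 1 else 0) + (if C then 1 else 0) = (if A \<or> B \<or> C then 1 else (0::int))"
      by (rule three_ind)
    moreover have "(A \<or> B \<or> C) \<longleftrightarrow> hz" unfolding A_def B_def C_def hz_def by arith
    ultimately show ?thesis by simp
  qed
  define P1 where "P1 = (c0 = c1 \<and> lo1 \<le> c0 \<and> c0 < hi1 \<and> iadj)"
  define P2 where "P2 = (c0 = c1 \<and> lo2 + w1 \<le> c0 \<and> c0 < hi2 + w1 \<and> iadj)"
  have v1: "Wt (vert_edges m [lo1..<hi1] s1) v u = (if P1 then s1 else 0)"
  proof -
    have "(c0 = c1 \<and> lo1 \<le> c0 \<and> c0 < hi1 \<and> ((i1 = i0 + 1 \<and> 1 \<le> i0 \<and> i0 < m) \<or> (i0 = i1 + 1 \<and> 1 \<le> i1 \<and> i1 < m))) \<longleftrightarrow> P1"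
      using iadj' unfolding P1_def by blast
    then show ?thesis unfolding v' u' Wt_vert by simp
  qed
  have v2: "(if w1 < c0 \<and> w1 < c1 then Wt (vert_edges m [lo2..<hi2] s2) (i0, c0 - w1) (i1, c1 - w1) else 0) = (if P2 then s2 else 0)"
  proof -
    have "(w1 < c0 \<and> w1 < c1 \<and> (c0 - w1 = c1 - w1 \<and> lo2 \<le> c0 - w1 \<and> c0 - w1 < hi2 \<and> ((i1 = i0 + 1 \<and> 1 \<le> i0 \<and> i0 < m) \<or> (i0 = i1 + 1 \<and> 1 \<le> i1 \<and> i1 < m)))) \<longleftrightarrow> P2"
    proof -
      have "(w1 < c0 \<and> w1 < c1 \<and> c0 - w1 = c1 - w1 \<and> lo2 \<le> c0 - w1 \<and> c0 - w1 < hi2) \<longleftrightarrow> (c0 = c1 \<and> lo2 + w1 \<le> c0 \<and> c0 < hi2 + w1)"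
        using lo2 by arith
      then show ?thesis using iadj' unfolding P2_def by blast
    qed
    then show ?thesis unfolding Wt_vert by auto
  qed
  define vt where "vt = (c0 = c1 \<and> iadj)"
  have vsum: "(if P1 then s1 else 0) + (if P2 then s2 else 0) = (if vt then \<sigma> c0 else 0)"
  proof -
    have "\<not> (P1 \<and> P2)" unfolding P1_def P2_def using hi1 lo2 by arith
    then show ?thesis unfolding P1_def P2_def vt_def \<sigma>_def using hi1 lo2 by auto
  qed
  have sh: "\<forall>e\<in>set (horiz_edges m w2 @ vert_edges m [lo2..<hi2] s2). 1 \<le> snd (fst e) \<and> 1 \<le> snd (fst (snd e))"
    using col_pos[OF lo2] by blast
  have "Wt ((horiz_edges m w1 @ vert_edges m [lo1..<hi1] s1) @ map (shE w1) (horiz_edges m w2 @ vert_edges m [lo2..<hi2] s2) @ conn m w1) v u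
     = (Wt (horiz_edges m w1) v u + (if w1 < c0 \<and> w1 < c1 then Wt (horiz_edges m w2) (i0, c0 - w1) (i1, c1 - w1) else 0) + Wt (conn m w1) v u)
       + (Wt (vert_edges m [lo1..<hi1] s1) v u + (if w1 < c0 \<and> w1 < c1 then Wt (vert_edges m [lo2..<hi2] s2) (i0, c0 - w1) (i1, c1 - w1) else 0))"
    unfolding Wt_append v' u' Wt_shift[OF sh] by (simp add: Wt_append)
  also have "\<dots> = (if hz then 1 else 0) + (if vt then \<sigma> c0 else 0)"
    unfolding hA hB hC habc v1 v2 vsum ..
  also have "\<dots> = grid \<sigma> v u"
  proof -
    have "\<not> (hz \<and> vt)" unfolding hz_def vt_def by arith
    then show ?thesis unfolding grid_def v' u' hz_def vt_def iadj_def by auto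
  qed
  finally show "Wt ((horiz_edges m w1 @ vert_edges m [lo1..<hi1] s1) @ map (shE w1) (horiz_edges m w2 @ vert_edges m [lo2..<hi2] s2) @ conn m w1) v u =
         grid (\<lambda>c. if lo1 \<le> c \<and> c < hi1 then s1 else if lo2 + w1 \<le> c \<and> c < hi2 + w1 then s2 else 0) v u"
    unfolding \<sigma>_def .
qed

lemma Msum_single:
  assumes "1 \<le> w" "1 \<le> lo" "hi \<le> w + 1"
  shows "Msum (sgrid m w lo hi s) = prog m (map (sig lo hi s) [1..<w+1]) (efull m) {1..m}"
proof -
  have nl: "noloop (horiz_edges m w @ vert_edges m [lo..<hi] s)"
    using nl_horiz[of m w] nl_vert[of m "[lo..<hi]" s] by (auto simp: noloop_set)
  have hw: "HW m w (sig lo hi s) (horiz_edges m w @ vert_edges m [lo..<hi] s)"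
    using HW_single[OF assms(2,3)] by simp
  show ?thesis
    unfolding sgrid_def grid_vertices_def using Msum_grid[OF hw nl assms(1)] .
qed

lemma map_sig_split:
  assumes "1 \<le> lo2" "hi1 \<le> w1 + 1"
  shows "map (\<lambda>c. if lo1 \<le> c \<and> c < hi1 then s1 else if lo2 + w1 \<le> c \<and> c < hi2 + w1 then s2 else 0) [1..<w1 + w2 + 1]
    = map (sig lo1 hi1 s1) [1..<w1+1] @ map (sig lo2 hi2 s2) [1..<w2+1]"
proof (rule nth_equalityI)
  fix k assume k: "k < length (map (\<lambda>c. if lo1 \<le> c \<and> c < hi1 then s1 else if lo2 + w1 \<le> c \<and> c < hi2 + w1 then s2 else 0) [1..<w1 + w2 + 1])"
  then have k': "k < w1 + w2" by (simp del: upt_Suc)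
  show "map (\<lambda>c. if lo1 \<le> c \<and> c < hi1 then s1 else if lo2 + w1 \<le> c \<and> c < hi2 + w1 then s2 else 0) [1..<w1 + w2 + 1] ! k
    = (map (sig lo1 hi1 s1) [1..<w1+1] @ map (sig lo2 hi2 s2) [1..<w2+1]) ! k"
  proof (cases "k < w1")
    case True
    then show ?thesis using k' assms by (simp add: nth_append sig_def del: upt_Suc)
  next
    case False
    have "(lo2 + w1 \<le> Suc k \<and> Suc k < hi2 + w1) = (lo2 \<le> Suc (k - w1) \<and> Suc (k - w1) < hi2)"
      using False by arith
    then show ?thesis using k' assms False by (simp add: nth_append sig_def del: upt_Suc)
  qed
qed (simp del: upt_Suc)

lemma Msum_adj:
  assumes m: "1 \<le> m" and w1: "1 \<le> w1" and lo1: "1 \<le> lo1" and hi1: "hi1 \<le> w1 + 1"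
    and lo2: "1 \<le> lo2" and hi2: "hi2 \<le> w2 + 1" and w2: "1 \<le> w2"
  shows "Msum (adjoin m (sgrid m w1 lo1 hi1 s1) (sgrid m w2 lo2 hi2 s2)) =
    prog m (map (sig lo1 hi1 s1) [1..<w1+1] @ map (sig lo2 hi2 s2) [1..<w2+1]) (efull m) {1..m}"
proof -
  define E where "E = (horiz_edges m w1 @ vert_edges m [lo1..<hi1] s1) @ map (shE w1) (horiz_edges m w2 @ vert_edges m [lo2..<hi2] s2) @ conn m w1"
  have G: "adjoin m (sgrid m w1 lo1 hi1 s1) (sgrid m w2 lo2 hi2 s2) = ({1..m} \<times> {1..w1 + w2}, E)"
    using adj_vertices[OF m w1] adj_edges[OF m w1] unfolding E_def by (metis prod.collapse)
  have nl: "noloop E"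
  proof -
    have a: "\<forall>e\<in>set (horiz_edges m w2 @ vert_edges m [lo2..<hi2] s2). fst e \<noteq> fst (snd e)"
      using nl_horiz[of m w2] nl_vert[of m "[lo2..<hi2]" s2] by auto
    show ?thesis unfolding noloop_set E_def
      using nl_horiz[of m w1] nl_vert[of m "[lo1..<hi1]" s1] nl_conn[of m w1] nl_shift[OF a, of w1] by auto
  qed
  have hw: "HW m (w1 + w2) (\<lambda>c. if lo1 \<le> c \<and> c < hi1 then s1 else if lo2 + w1 \<le> c \<and> c < hi2 + w1 then s2 else 0) E"
    unfolding E_def by (rule HW_adj[OF lo1 hi1 lo2 hi2])
  have "1 \<le> w1 + w2" using w1 by simp
  from Msum_grid[OF hw nl this] show ?thesis
    unfolding G map_sig_split[OF lo2 hi1] .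
qed

lemma list_pos: "map (sig 1 (a + 1) 1) [1..<a+1] = replicate a 1"
  by (rule nth_equalityI) (auto simp: sig_def simp del: upt_Suc)

lemma list_neg: "map (sig 2 (b + 2) s) [1..<b+2+1] = 0 # replicate b s @ [0]"
proof (rule nth_equalityI)
  fix k assume "k < length (map (sig 2 (b + 2) s) [1..<b+2+1])"
  then have k: "k < b + 2" by (simp del: upt_Suc)
  show "map (sig 2 (b + 2) s) [1..<b+2+1] ! k = (0 # replicate b s @ [0]) ! k"
  proof (cases k)
    case 0 then show ?thesis by (simp add: sig_def del: upt_Suc)
  next
    case (Suc k')
    then show ?thesis using k by (auto simp: sig_def nth_append simp del: upt_Suc)
  qed
qed (simp del: upt_Suc)

lemma Gmn_posn: "1 \<le> a \<Longrightarrow> Gmn m (int a) = sgrid m a 1 (a + 1) 1"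
  by (simp add: Gmn_pos)

lemma Gmn_negn: "Gmn m (- int b) = sgrid m (b + 2) 2 (b + 2) (-1)"
proof -
  have "nat (2 - - int b) = b + 2" "nat (1 - - int b) + 1 = b + 2" by simp_all
  then show ?thesis using Gmn_nonpos[of "- int b" m] by simp
qed

lemma Msum_pos_neg:
  assumes m: "1 \<le> m" and a: "1 \<le> a"
  shows "Msum (adjoin m (Gmn m (int a)) (Gmn m (- int b))) = prog m (replicate a 1 @ (0 # replicate b (-1) @ [0])) (efull m) {1..m}"
proof -
  have "Msum (adjoin m (sgrid m a 1 (a+1) 1) (sgrid m (b+2) 2 (b+2) (-1))) =
     prog m (map (sig 1 (a+1) 1) [1..<a+1] @ map (sig 2 (b+2) (-1)) [1..<b+2+1]) (efull m) {1..m}"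
    by (rule Msum_adj) (use m a in auto)
  then show ?thesis by (simp only: list_pos list_neg Gmn_posn[OF a] Gmn_negn)
qed

lemma Msum_neg_neg:
  assumes m: "1 \<le> m"
  shows "Msum (adjoin m (Gmn m (- int a)) (Gmn m (- int b))) =
    prog m ((0 # replicate a (-1) @ [0]) @ (0 # replicate b (-1) @ [0])) (efull m) {1..m}"
proof -
  have "Msum (adjoin m (sgrid m (a+2) 2 (a+2) (-1)) (sgrid m (b+2) 2 (b+2) (-1))) =
     prog m (map (sig 2 (a+2) (-1)) [1..<a+2+1] @ map (sig 2 (b+2) (-1)) [1..<b+2+1]) (efull m) {1..m}"
    by (rule Msum_adj) (use m in auto)
  then show ?thesis by (simp only: list_neg Gmn_negn)
qed

lemma Msum_neg:
  shows "Msum (Gmn m (- int a)) = prog m (0 # replicate a (-1) @ [0]) (efull m) {1..m}"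
proof -
  have "Msum (sgrid m (a+2) 2 (a+2) (-1)) = prog m (map (sig 2 (a+2) (-1)) [1..<a+2+1]) (efull m) {1..m}"
    by (rule Msum_single) auto
  then show ?thesis by (simp only: list_neg Gmn_negn)
qed

lemma eqon_at: "eqon m f g \<Longrightarrow> f {1..m} = g {1..m}"
  unfolding eqon_def by simp

lemma claim1_nat:
  assumes m: "1 \<le> m" and a: "1 \<le> a" and b: "1 \<le> b"
  shows "Msum (adjoin m (Gmn m (int a)) (Gmn m (- int b))) =
         Msum (adjoin m (Gmn m (int a - 1)) (Gmn m (- (int b - 1))))"
proof -
  define g where "g = prog m (replicate (b - 1) (-1) @ [0]) (efull m)"
  have rb: "replicate b (-1::int) = (-1) # replicate (b - 1) (-1)" using b
    by (cases b) auto
  have ib: "- (int b - 1) = - int (b - 1)" using b by simp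
  have L: "Msum (adjoin m (Gmn m (int a)) (Gmn m (- int b))) =
      prog m (replicate (a - 1) 1) (step m 1 (step m 0 (step m (-1) g))) {1..m}"
  proof -
    have ra: "replicate a (1::int) = replicate (a - 1) 1 @ [1]" using a
      by (cases a) (auto simp: replicate_append_same)
    show ?thesis unfolding Msum_pos_neg[OF m a] ra rb g_def by (simp add: prog_append)
  qed
  show ?thesis
  proof (cases "a = 1")
    case True
    have "Msum (adjoin m (Gmn m (int a - 1)) (Gmn m (- (int b - 1)))) =
        Msum (adjoin m (Gmn m (- int 0)) (Gmn m (- int (b - 1))))"
    proof -
      have e1: "int a - 1 = - int 0" using True by simp
      show ?thesis by (simp only: e1 ib)
    qed
    also have "\<dots> = step m 0 (step m 0 (step m 0 g)) {1..m}"
      unfolding Msum_neg_neg[OF m] g_def by (simp add: prog_append)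
    also have "\<dots> = step m 0 g {1..m}"
      by (rule eqon_at[OF step00])
    also have "\<dots> = step m 1 (step m 0 (step m (-1) g)) {1..m}"
      by (rule eqon_at[OF step_1_0_m1, symmetric])
    also have "\<dots> = Msum (adjoin m (Gmn m (int a)) (Gmn m (- int b)))"
      unfolding L using True by simp
    finally show ?thesis by simp
  next
    case False
    then have a2: "1 \<le> a - 1" using a by simp
    have ia: "int a - 1 = int (a - 1)" using a by simp
    have "Msum (adjoin m (Gmn m (int a - 1)) (Gmn m (- (int b - 1)))) =
        prog m (replicate (a - 1) 1) (step m 0 g) {1..m}"
      unfolding ia ib Msum_pos_neg[OF m a2] g_def by (simp add: prog_append)
    also have "\<dots> = prog m (replicate (a - 1) 1) (step m 1 (step m 0 (step m (-1) g))) {1..m}"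
      by (rule eqon_at[OF prog_cong[OF step_1_0_m1], symmetric])
    finally show ?thesis using L by simp
  qed
qed

lemma claim2_nat:
  assumes m: "1 \<le> m"
  shows "Msum (adjoin m (Gmn m (- int a)) (Gmn m (- int b))) = Msum (Gmn m (- int (a + b)))"
proof -
  define h where "h = prog m (replicate b (-1) @ [0]) (efull m)"
  have "Msum (adjoin m (Gmn m (- int a)) (Gmn m (- int b))) =
      prog m (0 # replicate a (-1)) (step m 0 (step m 0 h)) {1..m}"
    unfolding Msum_neg_neg[OF m] h_def by (simp add: prog_append)
  also have "\<dots> = prog m (0 # replicate a (-1)) h {1..m}"
    by (rule eqon_at[OF prog_cong[OF step00]])
  also have "\<dots> = Msum (Gmn m (- int (a + b)))"
    unfolding Msum_neg h_def by (simp add: prog_append replicate_add)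
  finally show ?thesis .
qed

theorem mainTheorem4:
  fixes m :: nat
  assumes "m \<ge> 1"
  shows "(\<forall>a b :: int. a \<ge> 1 \<longrightarrow> b \<ge> 1 \<longrightarrow>
            Msum (adjoin m (Gmn m a) (Gmn m (-b))) =
            Msum (adjoin m (Gmn m (a - 1)) (Gmn m (-(b - 1)))))
       \<and> (\<forall>a b :: int. a \<ge> 0 \<longrightarrow> b \<ge> 0 \<longrightarrow>
            Msum (adjoin m (Gmn m (-a)) (Gmn m (-b))) = Msum (Gmn m (-(a + b))))"
proof (intro conjI allI impI)
  fix a b :: int assume a: "a \<ge> 1" and b: "b \<ge> 1"
  have "0 \<le> a" "0 \<le> b" using a b by simp_all
  obtain a' where a': "a = int a'" using \<open>0 \<le> a\<close> by (rule nonneg_int_cases)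
  obtain b' where b': "b = int b'" using \<open>0 \<le> b\<close> by (rule nonneg_int_cases)
  have "1 \<le> a'" "1 \<le> b'" using a b a' b' by simp_all
  from claim1_nat[OF assms this] show "Msum (adjoin m (Gmn m a) (Gmn m (-b))) =
            Msum (adjoin m (Gmn m (a - 1)) (Gmn m (-(b - 1))))"
    unfolding a' b' .
next
  fix a b :: int assume a: "a \<ge> 0" and b: "b \<ge> 0"
  obtain a' where a': "a = int a'" using a by (rule nonneg_int_cases)
  obtain b' where b': "b = int b'" using b by (rule nonneg_int_cases)
  have eab: "int a' + int b' = int (a' + b')" by simp
  show "Msum (adjoin m (Gmn m (-a)) (Gmn m (-b))) = Msum (Gmn m (-(a + b)))"
    unfolding a' b' eab by (rule claim2_nat[OF assms])
qed

end
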